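(* For every modal proposition $A$, $\mathsf{iK4}\vdash A^\Box\to\Box A^\Box$.
   Context: Modal language: propositional variables, $\bot$, $\wedge,\vee,\to$, $\Box$; atomic = variables and $\bot$. $\mathsf{iK4}$: intuitionistic propositional logic in the modal language plus $\Box(A\to B)\to(\Box A\to\Box B)$ and $\Box A\to\Box\Box A$, closed under modus ponens and necessitation. Box-translation: $A^\Box:=A\wedge\Box A$ for atomic $A$; $(A\circ B)^\Box:=A^\Box\circ B^\Box$ for $\circ\in\{\wedge,\vee\}$; $(A\to B)^\Box:=(A^\Box\to B^\Box)\wedge\Box(A^\Box\to B^\Box)$; $(\Box A)^\Box:=\Box(A^\Box)$. *)

theory Defs
  imports Main
begin

datatype fm =
    Var nat
  | Bot
  | Conj fm fm
  | Disj fm fm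
  | Imp fm fm
  | Box fm

inductive iK4 :: "fm \<Rightarrow> bool" where
  ax_K: "iK4 (Imp A (Imp B A))"
| ax_S: "iK4 (Imp (Imp A (Imp B C)) (Imp (Imp A B) (Imp A C)))"
| ax_conjI: "iK4 (Imp A (Imp B (Conj A B)))"
| ax_conjE1: "iK4 (Imp (Conj A B) A)"
| ax_conjE2: "iK4 (Imp (Conj A B) B)"
| ax_disjI1: "iK4 (Imp A (Disj A B))"
| ax_disjI2: "iK4 (Imp B (Disj A B))"
| ax_disjE: "iK4 (Imp (Imp A C) (Imp (Imp B C) (Imp (Disj A B) C)))"
| ax_efq: "iK4 (Imp Bot A)"
| ax_boxK: "iK4 (Imp (Box (Imp A B)) (Imp (Box A) (Box B)))"
| ax_box4: "iK4 (Imp (Box A) (Box (Box A)))"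
| mp: "iK4 (Imp A B) \<Longrightarrow> iK4 A \<Longrightarrow> iK4 B"
| nec: "iK4 A \<Longrightarrow> iK4 (Box A)"

fun boxtr :: "fm \<Rightarrow> fm" where
  "boxtr (Var p) = Conj (Var p) (Box (Var p))"
| "boxtr Bot = Conj Bot (Box Bot)"
| "boxtr (Conj A B) = Conj (boxtr A) (boxtr B)"
| "boxtr (Disj A B) = Disj (boxtr A) (boxtr B)"
| "boxtr (Imp A B) = Conj (Imp (boxtr A) (boxtr B)) (Box (Imp (boxtr A) (boxtr B)))"
| "boxtr (Box A) = Box (boxtr A)"

end

theory Submission
  imports Defs
begin

lemma mp2: "iK4 (Imp X (Imp B C)) \<Longrightarrow> iK4 (Imp X B) \<Longrightarrow> iK4 (Imp X C)"
  by (meson iK4.ax_S iK4.mp)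

lemma weak: "iK4 C \<Longrightarrow> iK4 (Imp X C)"
  by (meson iK4.ax_K iK4.mp)

lemma imp_trans: "iK4 (Imp A B) \<Longrightarrow> iK4 (Imp B C) \<Longrightarrow> iK4 (Imp A C)"
  by (rule mp2[OF weak], assumption+)

lemma conjI': "iK4 (Imp X A) \<Longrightarrow> iK4 (Imp X B) \<Longrightarrow> iK4 (Imp X (Conj A B))"
  by (rule mp2[OF imp_trans[OF _ iK4.ax_conjI]])

lemma disjE': "iK4 (Imp A C) \<Longrightarrow> iK4 (Imp B C) \<Longrightarrow> iK4 (Imp (Disj A B) C)"
  by (meson iK4.ax_disjE iK4.mp)

lemma box_mono: "iK4 (Imp A B) \<Longrightarrow> iK4 (Imp (Box A) (Box B))"
  by (meson iK4.ax_boxK iK4.mp iK4.nec)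

lemma box_conj: "iK4 (Imp (Conj (Box A) (Box B)) (Box (Conj A B)))"
proof -
  have "iK4 (Imp (Box A) (Imp (Box B) (Box (Conj A B))))"
    by (rule imp_trans[OF box_mono[OF iK4.ax_conjI] iK4.ax_boxK])
  then have "iK4 (Imp (Conj (Box A) (Box B)) (Imp (Box B) (Box (Conj A B))))"
    by (rule imp_trans[OF iK4.ax_conjE1])
  then show ?thesis by (rule mp2) (rule iK4.ax_conjE2)
qed

lemma boxconj': "iK4 (Imp X (Box A)) \<Longrightarrow> iK4 (Imp X (Box B)) \<Longrightarrow> iK4 (Imp X (Box (Conj A B)))"
  by (rule imp_trans[OF conjI' box_conj])

theorem lemma4p13:
  shows "iK4 (Imp (boxtr A) (Box (boxtr A)))"
proof (induction A)
  case (Var p)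
  show ?case
    by simp (rule boxconj'[OF iK4.ax_conjE2 imp_trans[OF iK4.ax_conjE2 iK4.ax_box4]])
next
  case Bot
  show ?case by simp (rule imp_trans[OF iK4.ax_conjE1 iK4.ax_efq])
next
  case (Conj A B)
  then show ?case
    by simp (rule boxconj'[OF imp_trans[OF iK4.ax_conjE1] imp_trans[OF iK4.ax_conjE2]])
next
  case (Disj A B)
  then show ?case
    by simp (rule disjE'[OF imp_trans[OF _ box_mono[OF iK4.ax_disjI1]] imp_trans[OF _ box_mono[OF iK4.ax_disjI2]]])
next
  case (Imp A B)
  show ?case
    by simp (rule boxconj'[OF iK4.ax_conjE2 imp_trans[OF iK4.ax_conjE2 iK4.ax_box4]])
next
  case (Box A)
  show ?case by simp (rule iK4.ax_box4)
qed

end
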